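(* There is no complete pointed metric space $(M,d)$ and no $f\in \mathrm{Lip}_0(M,M)$ such that $\widehat f$ is a wild operator on $\mathcal F(M)$. More precisely, for every such $M$ and $f$: if $R_{\widehat f}$ has nonempty interior then $A_{\widehat f}$ has empty interior.
   Context: A pointed metric space is a metric space $(M,d)$ with a distinguished point $0=0_M$. For pointed metric spaces $M,N$, $\mathrm{Lip}_0(M,N)$ denotes the set of Lipschitz maps $f:M\to N$ with $f(0_M)=0_N$, and $\mathrm{Lip}_0(M)=\mathrm{Lip}_0(M,\mathbb R)$, a Banach space with norm $\mathrm{Lip}(\cdot)$ (the least Lipschitz constant). Let $\delta:M\to \mathrm{Lip}_0(M)^*$, $\delta(x)(\varphi)=\varphi(x)$. The Lipschitz-free space $\mathcal F(M)$ is the norm-closed linear span of $\delta(M)$ in $\mathrm{Lip}_0(M)^*$. For $f\in\mathrm{Lip}_0(M,N)$, $\widehat f:\mathcal F(M)\to\mathcal F(N)$ is the unique bounded linear operator with $\widehat f(\delta_M(x))=\delta_N(f(x))$ for all $x\in M$; $\|\widehat f\|=\mathrm{Lip}(f)$. For a self-map $g$ of a pointed metric space $(X,d)$ (in particular for a bounded linear operator on a Banach space, with base point the origin and the norm distance), write $R_g=\{x:\liminf_{n\to\infty} d(x,g^n(x))=0\}$, $U_g=\{x:\limsup_{n\to\infty} d(0,g^n(x))=\infty\}$, $A_g=\{x:\lim_{n\to\infty} d(0,g^n(x))=\infty\}$. A bounded linear operator $T$ on a Banach space $X$ is called wild if $X=A_T\cup R_T$, $\mathrm{int}(R_T)\neq\emptyset$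 and $\mathrm{int}(A_T)\neq\emptyset$. *)

theory Defs
  imports "HOL-Analysis.Analysis"
begin

text \<open>Pointed metric space: a type 'a of class metric_space with a base point z.
  Elements of Lip_0(M)^* are represented as functions from ('a => real) to real,
  taking the value 0 outside Lip_0(M).\<close>

definition Lip0 :: "'a::metric_space \<Rightarrow> ('a \<Rightarrow> real) set" where
  "Lip0 z = {\<phi>. (\<exists>C. lipschitz_on C UNIV \<phi>) \<and> \<phi> z = 0}"

definition lipconst :: "('a::metric_space \<Rightarrow> 'b::metric_space) \<Rightarrow> real" where
  "lipconst g = Inf {C. lipschitz_on C UNIV g}"

definition dbounded :: "'a::metric_space \<Rightarrow> (('a \<Rightarrow> real) \<Rightarrow> real) \<Rightarrow> bool" where
  "dbounded z \<mu> = bdd_above {\<bar>\<mu> \<phi>\<bar> | \<phi>. \<phi> \<in> Lip0 z \<and> lipconst \<phi> \<le> 1}"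

definition dnorm :: "'a::metric_space \<Rightarrow> (('a \<Rightarrow> real) \<Rightarrow> real) \<Rightarrow> real" where
  "dnorm z \<mu> = Sup (insert 0 {\<bar>\<mu> \<phi>\<bar> | \<phi>. \<phi> \<in> Lip0 z \<and> lipconst \<phi> \<le> 1})"

definition fdiff :: "('b \<Rightarrow> real) \<Rightarrow> ('b \<Rightarrow> real) \<Rightarrow> ('b \<Rightarrow> real)" where
  "fdiff \<mu> \<nu> = (\<lambda>\<phi>. \<mu> \<phi> - \<nu> \<phi>)"

definition delta :: "'a::metric_space \<Rightarrow> 'a \<Rightarrow> (('a \<Rightarrow> real) \<Rightarrow> real)" where
  "delta z x = (\<lambda>\<phi>. if \<phi> \<in> Lip0 z then \<phi> x else 0)"

definition delta_span :: "'a::metric_space \<Rightarrow> (('a \<Rightarrow> real) \<Rightarrow> real) set" where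
  "delta_span z = {\<mu>. \<exists>S c. finite S \<and> \<mu> = (\<lambda>\<phi>. \<Sum>x\<in>S. c x * delta z x \<phi>)}"

definition Free :: "'a::metric_space \<Rightarrow> (('a \<Rightarrow> real) \<Rightarrow> real) set" where
  "Free z = {\<mu>. (\<forall>\<phi>. \<phi> \<notin> Lip0 z \<longrightarrow> \<mu> \<phi> = 0) \<and> dbounded z \<mu> \<and>
      (\<forall>\<epsilon>>0. \<exists>\<nu>\<in>delta_span z. dnorm z (fdiff \<mu> \<nu>) < \<epsilon>)}"

definition bounded_linear_on_Free ::
  "'a::metric_space \<Rightarrow> ((('a \<Rightarrow> real) \<Rightarrow> real) \<Rightarrow> (('a \<Rightarrow> real) \<Rightarrow> real)) \<Rightarrow> bool" where
  "bounded_linear_on_Free z T \<longleftrightarrow>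
     (\<forall>\<mu>\<in>Free z. T \<mu> \<in> Free z) \<and>
     (\<forall>\<mu>\<in>Free z. \<forall>\<nu>\<in>Free z. \<forall>a b::real.
        T (\<lambda>\<phi>. a * \<mu> \<phi> + b * \<nu> \<phi>) = (\<lambda>\<phi>. a * T \<mu> \<phi> + b * T \<nu> \<phi>)) \<and>
     (\<exists>K. \<forall>\<mu>\<in>Free z. dnorm z (T \<mu>) \<le> K * dnorm z \<mu>)"

definition Rset :: "'a::metric_space \<Rightarrow> ((('a \<Rightarrow> real) \<Rightarrow> real) \<Rightarrow> (('a \<Rightarrow> real) \<Rightarrow> real))
     \<Rightarrow> (('a \<Rightarrow> real) \<Rightarrow> real) set" where
  "Rset z T = {\<mu>\<in>Free z. liminf (\<lambda>n. ereal (dnorm z (fdiff \<mu> ((T ^^ n) \<mu>)))) = 0}"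

definition Aset :: "'a::metric_space \<Rightarrow> ((('a \<Rightarrow> real) \<Rightarrow> real) \<Rightarrow> (('a \<Rightarrow> real) \<Rightarrow> real))
     \<Rightarrow> (('a \<Rightarrow> real) \<Rightarrow> real) set" where
  "Aset z T = {\<mu>\<in>Free z. filterlim (\<lambda>n. dnorm z ((T ^^ n) \<mu>)) at_top sequentially}"

definition free_interior :: "'a::metric_space \<Rightarrow> (('a \<Rightarrow> real) \<Rightarrow> real) set
     \<Rightarrow> (('a \<Rightarrow> real) \<Rightarrow> real) set" where
  "free_interior z S = {\<mu>\<in>Free z. \<exists>\<epsilon>>0. \<forall>\<nu>\<in>Free z. dnorm z (fdiff \<nu> \<mu>) < \<epsilon> \<longrightarrow> \<nu> \<in> S}"

end

theory Submission
  imports Defs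
begin


lemma lipconst_le:
  assumes "lipschitz_on C UNIV g"
  shows "dist (g x) (g y) \<le> lipconst g * dist x y"
proof (cases "dist x y = 0")
  case True then show ?thesis using assms by (auto simp: lipschitz_on_def)
next
  case False
  hence d: "dist x y > 0" by simp
  have "dist (g x) (g y) / dist x y \<le> lipconst g"
    unfolding lipconst_def
  proof (rule cInf_greatest)
    show "{C. lipschitz_on C UNIV g} \<noteq> {}" using assms by auto
    fix D assume "D \<in> {C. lipschitz_on C UNIV g}"
    hence "dist (g x) (g y) \<le> D * dist x y" by (auto simp: lipschitz_on_def)
    thus "dist (g x) (g y) / dist x y \<le> D" using d by (simp add: divide_le_eq)
  qed
  thus ?thesis using d by (simp add: divide_le_eq mult.commute)
qed

lemma unit_lip:
  assumes "\<phi> \<in> Lip0 z" "lipconst \<phi> \<le> 1"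
  shows "\<bar>\<phi> x - \<phi> y\<bar> \<le> dist x y"
proof -
  obtain C where "lipschitz_on C UNIV \<phi>" using assms by (auto simp: Lip0_def)
  hence "dist (\<phi> x) (\<phi> y) \<le> lipconst \<phi> * dist x y" by (rule lipconst_le)
  also have "\<dots> \<le> dist x y" using mult_right_mono[OF assms(2), of "dist x y"] by simp
  finally show ?thesis by (simp add: dist_real_def)
qed

lemma unit_lip0:
  assumes "\<phi> \<in> Lip0 z" "lipconst \<phi> \<le> 1"
  shows "\<bar>\<phi> x\<bar> \<le> dist x z"
  using unit_lip[OF assms, of x z] assms(1) by (simp add: Lip0_def)

lemma lip1_unit:
  assumes "lipschitz_on 1 UNIV \<phi>" "\<phi> z = 0"
  shows "\<phi> \<in> Lip0 z" "lipconst \<phi> \<le> 1"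
proof -
  show "\<phi> \<in> Lip0 z" using assms by (auto simp: Lip0_def)
  show "lipconst \<phi> \<le> 1" unfolding lipconst_def
    by (rule cInf_lower) (use assms in \<open>auto simp: bdd_below_def lipschitz_on_def intro!: exI[of _ 0]\<close>)
qed

lemma zero_unit: "(\<lambda>_. 0::real) \<in> Lip0 z" "lipconst (\<lambda>_. 0::real) \<le> 1"
  by (rule lip1_unit; auto simp: lipschitz_on_def)+

lemma dnorm_ge:
  assumes "dbounded z \<mu>" "\<phi> \<in> Lip0 z" "lipconst \<phi> \<le> 1"
  shows "\<bar>\<mu> \<phi>\<bar> \<le> dnorm z \<mu>"
  unfolding dnorm_def
  by (rule cSup_upper) (use assms in \<open>auto simp: dbounded_def\<close>)

lemma dnorm_le:
  assumes "\<And>\<phi>. \<phi> \<in> Lip0 z \<Longrightarrow> lipconst \<phi> \<le> 1 \<Longrightarrow> \<bar>\<mu> \<phi>\<bar> \<le> K"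
  shows "dnorm z \<mu> \<le> K"
proof -
  have "0 \<le> K" using assms[OF zero_unit] by linarith
  thus ?thesis unfolding dnorm_def
    by (intro cSup_least) (use assms in auto)
qed

lemma dbounded_I:
  assumes "\<And>\<phi>. \<phi> \<in> Lip0 z \<Longrightarrow> lipconst \<phi> \<le> 1 \<Longrightarrow> \<bar>\<mu> \<phi>\<bar> \<le> K"
  shows "dbounded z \<mu>"
  unfolding dbounded_def bdd_above_def using assms by blast

lemma Free_dbounded: "\<mu> \<in> Free z \<Longrightarrow> dbounded z \<mu>"
  by (simp add: Free_def)

lemma dbounded_fdiff:
  assumes "dbounded z \<mu>" "dbounded z \<nu>"
  shows "dbounded z (fdiff \<mu> \<nu>)"
  by (rule dbounded_I[where K="dnorm z \<mu> + dnorm z \<nu>"])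
     (use dnorm_ge[OF assms(1)] dnorm_ge[OF assms(2)] in \<open>force simp: fdiff_def\<close>)

lemma dnorm_fdiff_sym: "dnorm z (fdiff \<mu> \<nu>) = dnorm z (fdiff \<nu> \<mu>)"
  unfolding dnorm_def fdiff_def by (simp add: abs_minus_commute)

definition comb :: "'a::metric_space \<Rightarrow> 'j set \<Rightarrow> ('j \<Rightarrow> real) \<Rightarrow> ('j \<Rightarrow> 'a) \<Rightarrow> (('a \<Rightarrow> real) \<Rightarrow> real)" where
  "comb z J a P = (\<lambda>\<phi>. \<Sum>k\<in>J. a k * delta z (P k) \<phi>)"

lemma comb_unit: "\<phi> \<in> Lip0 z \<Longrightarrow> comb z J a P \<phi> = (\<Sum>k\<in>J. a k * \<phi> (P k))"
  by (simp add: comb_def delta_def)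

lemma comb_bound:
  assumes "\<phi> \<in> Lip0 z" "lipconst \<phi> \<le> 1"
  shows "\<bar>comb z J a P \<phi>\<bar> \<le> (\<Sum>k\<in>J. \<bar>a k\<bar> * dist (P k) z)"
proof -
  have "\<bar>comb z J a P \<phi>\<bar> \<le> (\<Sum>k\<in>J. \<bar>a k * \<phi> (P k)\<bar>)"
    unfolding comb_unit[OF assms(1)] by (rule sum_abs)
  also have "\<dots> \<le> (\<Sum>k\<in>J. \<bar>a k\<bar> * dist (P k) z)"
    by (rule sum_mono) (use unit_lip0[OF assms] in \<open>auto simp: abs_mult intro: mult_left_mono\<close>)
  finally show ?thesis .
qed

lemma comb_delta_span:
  assumes "finite J"
  shows "comb z J a P \<in> delta_span z"
proof -
  have "comb z J a P = (\<lambda>\<phi>. \<Sum>x\<in>P`J. (\<Sum>k\<in>{k\<in>J. P k = x}. a k) * delta z x \<phi>)"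
  proof
    fix \<phi>
    have "comb z J a P \<phi> = (\<Sum>x\<in>P`J. \<Sum>k\<in>{k\<in>J. P k = x}. a k * delta z (P k) \<phi>)"
      unfolding comb_def by (rule sum.image_gen[OF assms])
    also have "\<dots> = (\<Sum>x\<in>P`J. (\<Sum>k\<in>{k\<in>J. P k = x}. a k) * delta z x \<phi>)"
      by (rule sum.cong) (auto simp: sum_distrib_right)
    finally show "comb z J a P \<phi> = \<dots>" .
  qed
  thus ?thesis unfolding delta_span_def using assms
    by (intro CollectI exI[of _ "P ` J"] exI[of _ "\<lambda>x. \<Sum>k\<in>{k\<in>J. P k = x}. a k"]) simp
qed

lemma dnorm_zero: "dnorm z (\<lambda>\<phi>. 0) = 0"
proof (rule antisym)
  show "dnorm z (\<lambda>\<phi>. 0) \<le> 0" by (rule dnorm_le) simp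
  have "dbounded z (\<lambda>\<phi>. 0)" by (rule dbounded_I[where K=0]) simp
  from dnorm_ge[OF this zero_unit] show "0 \<le> dnorm z (\<lambda>\<phi>. 0)" by simp
qed

lemma delta_span_Free: "\<mu> \<in> delta_span z \<Longrightarrow> \<mu> \<in> Free z"
proof -
  assume "\<mu> \<in> delta_span z"
  then obtain S c where S: "finite S" "\<mu> = comb z S c id"
    unfolding delta_span_def comb_def by auto
  have "dbounded z \<mu>" using S comb_bound by (intro dbounded_I) blast
  moreover have "\<forall>\<phi>. \<phi> \<notin> Lip0 z \<longrightarrow> \<mu> \<phi> = 0" using S by (simp add: comb_def delta_def)
  moreover have "dnorm z (fdiff \<mu> \<mu>) = 0" by (simp add: fdiff_def dnorm_zero)
  ultimately show ?thesis unfolding Free_def using \<open>\<mu> \<in> delta_span z\<close> by (auto intro!: bexI[of _ \<mu>])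
qed

lemma comb_Free: "finite J \<Longrightarrow> comb z J a P \<in> Free z"
  by (rule delta_span_Free[OF comb_delta_span])



lemma delta_comb: "delta z x = comb z {x} (\<lambda>_. 1) id"
  by (simp add: comb_def)

lemma T_comb:
  assumes bl: "bounded_linear_on_Free z T" and hT: "\<forall>x. T (delta z x) = delta z (f x)"
    and fin: "finite J"
  shows "T (comb z J a P) = comb z J a (f \<circ> P)"
  using fin
proof (induction J rule: finite_induct)
  case empty
  have lin: "\<forall>\<mu>\<in>Free z. \<forall>\<nu>\<in>Free z. \<forall>a b::real.
        T (\<lambda>\<phi>. a * \<mu> \<phi> + b * \<nu> \<phi>) = (\<lambda>\<phi>. a * T \<mu> \<phi> + b * T \<nu> \<phi>)"
    using bl by (simp add: bounded_linear_on_Free_def)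
  have z0: "(\<lambda>\<phi>. 0) \<in> Free z" using comb_Free[of "{}" z a P] by (simp add: comb_def)
  have "T (\<lambda>\<phi>. 0 * (\<lambda>\<phi>. 0) \<phi> + 0 * (\<lambda>\<phi>. 0) \<phi>) = (\<lambda>\<phi>. 0 * T (\<lambda>\<phi>. 0) \<phi> + 0 * T (\<lambda>\<phi>. 0) \<phi>)"
    by (rule lin[rule_format, OF z0 z0])
  then show ?case by (simp add: comb_def)
next
  case (insert k J)
  have lin: "\<forall>\<mu>\<in>Free z. \<forall>\<nu>\<in>Free z. \<forall>a b::real.
        T (\<lambda>\<phi>. a * \<mu> \<phi> + b * \<nu> \<phi>) = (\<lambda>\<phi>. a * T \<mu> \<phi> + b * T \<nu> \<phi>)"
    using bl by (simp add: bounded_linear_on_Free_def)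
  have d: "delta z (P k) \<in> Free z" unfolding delta_comb by (rule comb_Free) simp
  have c: "comb z J a P \<in> Free z" by (rule comb_Free) (use insert in simp)
  have eq: "comb z (insert k J) a P = (\<lambda>\<phi>. a k * delta z (P k) \<phi> + 1 * comb z J a P \<phi>)"
    using insert by (simp add: comb_def)
  have "T (\<lambda>\<phi>. a k * delta z (P k) \<phi> + 1 * comb z J a P \<phi>) =
        (\<lambda>\<phi>. a k * T (delta z (P k)) \<phi> + 1 * T (comb z J a P) \<phi>)"
    using lin d c by blast
  then show ?case using insert hT by (simp add: eq comb_def)
qed

lemma T_pow_comb:
  assumes bl: "bounded_linear_on_Free z T" and hT: "\<forall>x. T (delta z x) = delta z (f x)"
    and fin: "finite J"
  shows "(T ^^ n) (comb z J a P) = comb z J a ((f ^^ n) \<circ> P)"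
proof (induction n)
  case 0 then show ?case by simp
next
  case (Suc n)
  have "(T ^^ Suc n) (comb z J a P) = T ((T ^^ n) (comb z J a P))" by simp
  also have "\<dots> = T (comb z J a ((f ^^ n) \<circ> P))" using Suc by (simp only:)
  also have "\<dots> = comb z J a (f \<circ> ((f ^^ n) \<circ> P))" by (rule T_comb[OF bl hT fin])
  finally show ?case by (simp add: comp_def)
qed

lemma relpow_dist:
  assumes "\<forall>(i,j)\<in>R. dist (P i) (P j) \<le> L" "(i,j) \<in> R ^^ n"
  shows "dist (P i) (P j) \<le> real n * L"
  using assms(2)
proof (induction n arbitrary: j)
  case 0 then show ?case by simp
next
  case (Suc n)
  then obtain y where y: "(i,y) \<in> R ^^ n" "(y,j) \<in> R" by auto
  have "dist (P i) (P j) \<le> dist (P i) (P y) + dist (P y) (P j)" by (rule dist_triangle)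
  also have "\<dots> \<le> real n * L + L" using Suc.IH[OF y(1)] y(2) assms(1) by fastforce
  finally show ?case by (simp add: algebra_simps)
qed



lemma key:
  fixes J :: "'j set" and P :: "'j \<Rightarrow> 'a::metric_space" and a \<gamma> :: "'j \<Rightarrow> real"
  assumes fin: "finite J" and m: "m > 0"
    and am: "\<forall>S\<subseteq>J. (\<Sum>k\<in>S. a k) \<noteq> 0 \<longrightarrow> m \<le> \<bar>\<Sum>k\<in>S. a k\<bar>"
    and ag: "\<forall>S\<subseteq>J. (\<Sum>k\<in>S. a k) = 0 \<longrightarrow> (\<Sum>k\<in>S. \<gamma> k) = 0"
    and B: "\<And>\<phi>. \<phi> \<in> Lip0 z \<Longrightarrow> lipconst \<phi> \<le> 1 \<Longrightarrow> \<bar>\<Sum>k\<in>J. a k * \<phi> (P k)\<bar> \<le> B"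
    and \<phi>: "\<phi> \<in> Lip0 z" "lipconst \<phi> \<le> 1"
  shows "\<bar>\<Sum>k\<in>J. \<gamma> k * \<phi> (P k)\<bar> \<le> (real (card J ^ 2) + 1) * (B / m + 1) * (\<Sum>k\<in>J. \<bar>\<gamma> k\<bar>)"
proof -
  have B0: "0 \<le> B" using B[OF zero_unit] by simp
  define L where "L = B / m + 1"
  have "0 \<le> B / m" using B0 m by simp
  hence L0: "L > 0" by (simp add: L_def)
  have Lm: "B < L * m" using m by (simp add: L_def algebra_simps)
  define E where "E = {(i,j). i \<in> J \<and> j \<in> J \<and> dist (P i) (P j) \<le> L}"
  have EJ: "E \<subseteq> J \<times> J" by (auto simp: E_def)
  have finE: "finite E" using EJ fin finite_subset by blast
  have cardE: "card E \<le> card J ^ 2"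
    using card_mono[OF finite_cartesian_product[OF fin fin] EJ] by (simp add: card_cartesian_product power2_eq_square)
  have symE: "sym E" by (auto simp: E_def sym_def dist_commute)
  have symT: "sym (E\<^sup>+)" using symE by (rule sym_trancl)
  have EL: "\<forall>(i,j)\<in>E. dist (P i) (P j) \<le> L" by (auto simp: E_def)
  have dT: "dist (P i) (P j) \<le> real (card E) * L" if "(i,j) \<in> E\<^sup>+" for i j
  proof -
    from that have "(i,j) \<in> ntrancl (card E - 1) E" using finite_trancl_ntranl[OF finE] by simp
    then obtain n where n: "0 < n" "n \<le> Suc (card E - 1)" "(i,j) \<in> E ^^ n"
      unfolding ntrancl_def by auto
    have "E \<noteq> {}" using that by (auto dest: tranclD)
    hence "card E > 0" using finE by (simp add: card_gt_0_iff)
    hence "n \<le> card E" using n by simp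
    have "dist (P i) (P j) \<le> real n * L" by (rule relpow_dist[OF EL n(3)])
    also have "\<dots> \<le> real (card E) * L" using \<open>n \<le> card E\<close> L0 by (simp add: mult_right_mono)
    finally show ?thesis .
  qed
  define cls where "cls i = {j. (i,j) \<in> E\<^sup>+}" for i
  have cls_refl: "i \<in> cls i" if "i \<in> J" for i
    using that L0 by (auto simp: cls_def E_def intro!: r_into_trancl)
  have clsJ: "cls i \<subseteq> J" for i
    using trancl_subset_Sigma[OF EJ] by (auto simp: cls_def)
  have cls_eq: "cls j = cls i" if "j \<in> cls i" for i j
  proof -
    have ij: "(i,j) \<in> E\<^sup>+" using that by (simp add: cls_def)
    hence ji: "(j,i) \<in> E\<^sup>+" using symT by (simp add: symD)
    show ?thesis unfolding cls_def using ij ji by (auto intro: trancl_trans)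
  qed
  have sep: "L < dist (P j) (P k)" if "i \<in> J" "k \<in> J" "k \<notin> cls i" "j \<in> cls i" for i j k
  proof (rule ccontr)
    assume "\<not> L < dist (P j) (P k)"
    hence "(j,k) \<in> E" using that clsJ by (auto simp: E_def)
    hence "(i,k) \<in> E\<^sup>+" using that by (auto simp: cls_def intro: trancl_into_trancl)
    thus False using that by (simp add: cls_def)
  qed
  have partA: "(\<Sum>k\<in>cls i. \<gamma> k) = 0" if iJ: "i \<in> J" and far: "\<forall>j\<in>cls i. L < dist (P j) z" for i
  proof -
    define A where "A = P ` cls i"
    have Ane: "A \<noteq> {}" using cls_refl[OF iJ] by (auto simp: A_def)
    define \<psi> where "\<psi> x = max 0 (L - infdist x A)" for x
    have geL: "L \<le> infdist x A" if "\<forall>j\<in>cls i. L < dist x (P j)" for x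
    proof -
      have "L \<le> (INF a\<in>A. dist x a)"
        by (rule cINF_greatest) (use Ane that in \<open>auto simp: A_def less_imp_le\<close>)
      thus ?thesis using infdist_notempty[OF Ane, of x] by simp
    qed
    have lip: "lipschitz_on 1 UNIV \<psi>"
      unfolding lipschitz_on_def
    proof (intro conjI ballI)
      fix x y
      have "\<bar>infdist x A - infdist y A\<bar> \<le> dist x y" by (rule infdist_triangle_abs)
      thus "dist (\<psi> x) (\<psi> y) \<le> 1 * dist x y" by (simp add: \<psi>_def dist_real_def)
    qed simp
    have \<psi>z: "\<psi> z = 0" using geL[of z] far by (simp add: \<psi>_def dist_commute)
    note u = lip1_unit[OF lip \<psi>z]
    have in_cls: "\<psi> (P k) = L" if "k \<in> cls i" for k
      using that L0 by (simp add: \<psi>_def A_def)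
    have out_cls: "\<psi> (P k) = 0" if "k \<in> J - cls i" for k
    proof -
      have "L \<le> infdist (P k) A" 
      proof (rule geL, intro ballI)
        fix j assume "j \<in> cls i"
        thus "L < dist (P k) (P j)" using sep[OF iJ, of k j] that by (simp add: dist_commute)
      qed
      thus ?thesis by (simp add: \<psi>_def)
    qed
    have "(\<Sum>k\<in>J. a k * \<psi> (P k)) = (\<Sum>k\<in>J - cls i. a k * \<psi> (P k)) + (\<Sum>k\<in>cls i. a k * \<psi> (P k))"
      by (rule sum.subset_diff[OF clsJ fin])
    also have "\<dots> = L * (\<Sum>k\<in>cls i. a k)"
      using in_cls out_cls by (simp add: sum_distrib_left mult.commute)
    finally have "\<bar>L * (\<Sum>k\<in>cls i. a k)\<bar> \<le> B" using B[OF u] by simp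
    hence "L * \<bar>\<Sum>k\<in>cls i. a k\<bar> \<le> B" using L0 by (simp add: abs_mult)
    hence "L * \<bar>\<Sum>k\<in>cls i. a k\<bar> < L * m" using Lm by linarith
    hence "\<bar>\<Sum>k\<in>cls i. a k\<bar> < m" using L0 by simp
    have "(\<Sum>k\<in>cls i. a k) = 0"
    proof (rule ccontr)
      assume "(\<Sum>k\<in>cls i. a k) \<noteq> 0"
      hence "m \<le> \<bar>\<Sum>k\<in>cls i. a k\<bar>" using am clsJ[of i] by blast
      thus False using \<open>\<bar>\<Sum>k\<in>cls i. a k\<bar> < m\<close> by linarith
    qed
    thus ?thesis using ag clsJ[of i] by blast
  qed
  define D where "D = real (card E) * L + L"
  have D0: "0 \<le> D" using L0 by (simp add: D_def)
  have perclass: "\<bar>\<Sum>k\<in>cls i. \<gamma> k * \<phi> (P k)\<bar> \<le> D * (\<Sum>k\<in>cls i. \<bar>\<gamma> k\<bar>)" if iJ: "i \<in> J" for i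
  proof (cases "\<exists>j\<in>cls i. dist (P j) z \<le> L")
    case True
    then obtain j where j: "j \<in> cls i" "dist (P j) z \<le> L" by blast
    have b: "\<bar>\<phi> (P k)\<bar> \<le> D" if "k \<in> cls i" for k
    proof -
      have "k \<in> cls j" using that cls_eq[OF j(1)] by simp
      hence "dist (P j) (P k) \<le> real (card E) * L" using dT by (simp add: cls_def)
      have "\<bar>\<phi> (P k)\<bar> \<le> dist (P k) z" by (rule unit_lip0[OF \<phi>])
      also have "\<dots> \<le> dist (P k) (P j) + dist (P j) z" by (rule dist_triangle)
      also have "\<dots> \<le> D" using \<open>dist (P j) (P k) \<le> _\<close> j(2) by (simp add: D_def dist_commute)
      finally show ?thesis .
    qed
    have "\<bar>\<Sum>k\<in>cls i. \<gamma> k * \<phi> (P k)\<bar> \<le> (\<Sum>k\<in>cls i. \<bar>\<gamma> k * \<phi> (P k)\<bar>)" by (rule sum_abs)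
    also have "\<dots> \<le> (\<Sum>k\<in>cls i. \<bar>\<gamma> k\<bar> * D)"
      by (rule sum_mono) (use b in \<open>auto simp: abs_mult intro: mult_left_mono\<close>)
    finally show ?thesis by (simp add: sum_distrib_left ac_simps)
  next
    case False
    hence "(\<Sum>k\<in>cls i. \<gamma> k) = 0" using partA[OF iJ] by force
    hence "(\<Sum>k\<in>cls i. \<gamma> k * \<phi> (P i)) = 0" by (simp add: sum_distrib_right[symmetric])
    hence eq: "(\<Sum>k\<in>cls i. \<gamma> k * \<phi> (P k)) = (\<Sum>k\<in>cls i. \<gamma> k * (\<phi> (P k) - \<phi> (P i)))"
      by (simp add: algebra_simps sum_subtractf)
    have b: "\<bar>\<phi> (P k) - \<phi> (P i)\<bar> \<le> D" if "k \<in> cls i" for k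
    proof -
      have "\<bar>\<phi> (P k) - \<phi> (P i)\<bar> \<le> dist (P k) (P i)" by (rule unit_lip[OF \<phi>])
      also have "\<dots> \<le> real (card E) * L" using dT that by (simp add: cls_def dist_commute)
      also have "\<dots> \<le> D" using L0 by (simp add: D_def)
      finally show ?thesis .
    qed
    have "\<bar>\<Sum>k\<in>cls i. \<gamma> k * (\<phi> (P k) - \<phi> (P i))\<bar> \<le> (\<Sum>k\<in>cls i. \<bar>\<gamma> k * (\<phi> (P k) - \<phi> (P i))\<bar>)" by (rule sum_abs)
    also have "\<dots> \<le> (\<Sum>k\<in>cls i. \<bar>\<gamma> k\<bar> * D)"
      by (rule sum_mono) (use b in \<open>auto simp: abs_mult intro: mult_left_mono\<close>)
    finally show ?thesis unfolding eq by (simp add: sum_distrib_left ac_simps)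
  qed
  have grp: "(\<Sum>k\<in>J. h k) = (\<Sum>C\<in>cls ` J. \<Sum>k\<in>C. h k)" for h :: "'j \<Rightarrow> real"
  proof -
    have "(\<Sum>k\<in>J. h k) = (\<Sum>C\<in>cls ` J. \<Sum>k\<in>{x. x \<in> J \<and> cls x = C}. h k)"
      by (rule sum.group[symmetric]) (use fin in auto)
    also have "\<dots> = (\<Sum>C\<in>cls ` J. \<Sum>k\<in>C. h k)"
    proof (rule sum.cong[OF refl])
      fix C assume "C \<in> cls ` J"
      then obtain i where i: "i \<in> J" "C = cls i" by auto
      have "{x. x \<in> J \<and> cls x = C} = C"
        using i cls_eq cls_refl clsJ by blast
      thus "(\<Sum>k\<in>{x. x \<in> J \<and> cls x = C}. h k) = (\<Sum>k\<in>C. h k)" by simp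
    qed
    finally show ?thesis .
  qed
  have "\<bar>\<Sum>k\<in>J. \<gamma> k * \<phi> (P k)\<bar> = \<bar>\<Sum>C\<in>cls ` J. \<Sum>k\<in>C. \<gamma> k * \<phi> (P k)\<bar>" by (simp only: grp)
  also have "\<dots> \<le> (\<Sum>C\<in>cls ` J. \<bar>\<Sum>k\<in>C. \<gamma> k * \<phi> (P k)\<bar>)" by (rule sum_abs)
  also have "\<dots> \<le> (\<Sum>C\<in>cls ` J. D * (\<Sum>k\<in>C. \<bar>\<gamma> k\<bar>))"
    by (rule sum_mono) (use perclass in auto)
  also have "\<dots> = D * (\<Sum>k\<in>J. \<bar>\<gamma> k\<bar>)" by (simp add: grp sum_distrib_left)
  also have "\<dots> \<le> (real (card J ^ 2) + 1) * (B / m + 1) * (\<Sum>k\<in>J. \<bar>\<gamma> k\<bar>)"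
  proof (rule mult_right_mono)
    have "real (card E) \<le> real (card J ^ 2)" using cardE by linarith
    hence "real (card E) * L \<le> real (card J ^ 2) * L" using L0 by (simp add: mult_right_mono)
    thus "D \<le> (real (card J ^ 2) + 1) * (B / m + 1)" by (simp add: D_def L_def algebra_simps)
  qed (simp add: sum_nonneg)
  finally show ?thesis .
qed



lemma freq_small:
  assumes "liminf (\<lambda>n. ereal (X n)) = 0"
  shows "\<exists>\<^sub>F n in sequentially. X n < 1"
proof (rule ccontr)
  assume "\<not> ?thesis"
  hence ev: "\<forall>\<^sub>F n in sequentially. 1 \<le> X n" by (simp add: not_frequently not_less)
  have "(1::ereal) \<le> liminf (\<lambda>n. ereal (X n))"
    unfolding le_Liminf_iff
  proof (intro allI impI)
    fix y :: ereal assume "y < 1"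
    show "\<forall>\<^sub>F n in sequentially. y < ereal (X n)"
      using ev by eventually_elim (use \<open>y < 1\<close> in \<open>auto intro: less_le_trans\<close>)
  qed
  thus False using assms by simp
qed

lemma dnorm_nonneg_b: "dbounded z \<mu> \<Longrightarrow> 0 \<le> dnorm z \<mu>"
  using dnorm_ge[OF _ zero_unit] by (meson abs_ge_zero order_trans)

theorem theorem1p3:
  fixes z :: "'a::complete_space"
    and f :: "'a \<Rightarrow> 'a"
    and T :: "(('a \<Rightarrow> real) \<Rightarrow> real) \<Rightarrow> (('a \<Rightarrow> real) \<Rightarrow> real)"
  assumes "\<exists>C. lipschitz_on C UNIV f"
    and "f z = z"
    and "bounded_linear_on_Free z T"
    and "\<forall>x. T (delta z x) = delta z (f x)"
    and "free_interior z (Rset z T) \<noteq> {}"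
  shows "free_interior z (Aset z T) = {}"
proof (rule ccontr)
  note bl = assms(3) and hT = assms(4)
  assume "free_interior z (Aset z T) \<noteq> {}"
  then obtain \<mu>0 \<epsilon>' where \<mu>0: "\<mu>0 \<in> Free z" "\<epsilon>' > 0"
    "\<forall>\<nu>\<in>Free z. dnorm z (fdiff \<nu> \<mu>0) < \<epsilon>' \<longrightarrow> \<nu> \<in> Aset z T"
    unfolding free_interior_def by blast
  obtain \<nu>0 \<epsilon> where \<nu>0: "\<nu>0 \<in> Free z" "\<epsilon> > 0"
    "\<forall>\<nu>\<in>Free z. dnorm z (fdiff \<nu> \<nu>0) < \<epsilon> \<longrightarrow> \<nu> \<in> Rset z T"
    using assms(5) unfolding free_interior_def by blast
  obtain \<mu> where \<mu>: "\<mu> \<in> delta_span z" "dnorm z (fdiff \<mu>0 \<mu>) < \<epsilon>'"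
    using \<mu>0(1,2) unfolding Free_def by blast
  have \<mu>F: "\<mu> \<in> Free z" by (rule delta_span_Free[OF \<mu>(1)])
  have \<mu>A: "\<mu> \<in> Aset z T" using \<mu>0(3) \<mu>F \<mu>(2) by (simp add: dnorm_fdiff_sym)
  obtain S2 c where S2: "finite S2" "\<mu> = (\<lambda>\<phi>. \<Sum>x\<in>S2. c x * delta z x \<phi>)"
    using \<mu>(1) unfolding delta_span_def by blast
  have "\<epsilon> / 2 > 0" using \<nu>0(2) by simp
  then obtain \<nu> where \<nu>: "\<nu> \<in> delta_span z" "dnorm z (fdiff \<nu>0 \<nu>) < \<epsilon> / 2"
    using \<nu>0(1) unfolding Free_def by blast
  have \<nu>F: "\<nu> \<in> Free z" by (rule delta_span_Free[OF \<nu>(1)])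
  obtain S1 b where S1: "finite S1" "\<nu> = (\<lambda>\<phi>. \<Sum>x\<in>S1. b x * delta z x \<phi>)"
    using \<nu>(1) unfolding delta_span_def by blast
  define J where "J = S1 <+> S2"
  have finJ: "finite J" using S1 S2 by (simp add: J_def)
  define P :: "'a + 'a \<Rightarrow> 'a" where "P = case_sum id id"
  define \<beta> :: "'a + 'a \<Rightarrow> real" where "\<beta> = case_sum b (\<lambda>_. 0)"
  define \<gamma> :: "'a + 'a \<Rightarrow> real" where "\<gamma> = case_sum (\<lambda>_. 0) c"
  have \<mu>c: "\<mu> = comb z J \<gamma> P"
    using S1 S2 by (simp add: comb_def J_def \<gamma>_def P_def sum.Plus comp_def)
  have \<nu>c: "\<nu> = comb z J \<beta> P"
    using S1 S2 by (simp add: comb_def J_def \<beta>_def P_def sum.Plus comp_def)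
  have \<mu>b: "dbounded z \<mu>" using \<mu>F by (rule Free_dbounded)
  have dn\<mu>: "0 \<le> dnorm z \<mu>" by (rule dnorm_nonneg_b[OF \<mu>b])
  define t0 where "t0 = \<epsilon> / (2 * (dnorm z \<mu> + 1))"
  have t0: "t0 > 0" using \<nu>0(2) dn\<mu> by (simp add: t0_def)
  define Bad where "Bad = (\<lambda>S. - (\<Sum>k\<in>S. \<beta> k) / (\<Sum>k\<in>S. \<gamma> k)) ` {S. S \<subseteq> J \<and> (\<Sum>k\<in>S. \<gamma> k) \<noteq> 0}"
  have "finite {S. S \<subseteq> J \<and> (\<Sum>k\<in>S. \<gamma> k) \<noteq> 0}"
    by (rule finite_subset[of _ "Pow J"]) (use finJ in auto)
  hence "finite Bad" unfolding Bad_def by (rule finite_imageI)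
  moreover have "infinite {0<..<t0}" using t0 by (rule infinite_Ioo)
  ultimately have "infinite ({0<..<t0} - Bad)" using Diff_infinite_finite by blast
  then obtain t where t: "t \<in> {0<..<t0}" "t \<notin> Bad" using infinite_imp_nonempty by blast
  define a where "a k = \<beta> k + t * \<gamma> k" for k
  have ag: "\<forall>S\<subseteq>J. (\<Sum>k\<in>S. a k) = 0 \<longrightarrow> (\<Sum>k\<in>S. \<gamma> k) = 0"
  proof (intro allI impI; rule ccontr)
    fix S assume S: "S \<subseteq> J" "(\<Sum>k\<in>S. a k) = 0" "(\<Sum>k\<in>S. \<gamma> k) \<noteq> 0"
    hence "(\<Sum>k\<in>S. \<beta> k) + t * (\<Sum>k\<in>S. \<gamma> k) = 0"
      by (simp add: a_def sum.distrib sum_distrib_left)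
    hence "t = - (\<Sum>k\<in>S. \<beta> k) / (\<Sum>k\<in>S. \<gamma> k)" using S(3) by (simp add: field_simps)
    hence "t \<in> Bad" using S unfolding Bad_def by blast
    thus False using t(2) by simp
  qed
  define Vals where "Vals = (\<lambda>S. \<bar>\<Sum>k\<in>S. a k\<bar>) ` {S. S \<subseteq> J \<and> (\<Sum>k\<in>S. a k) \<noteq> 0}"
  have "finite {S. S \<subseteq> J \<and> (\<Sum>k\<in>S. a k) \<noteq> 0}"
    by (rule finite_subset[of _ "Pow J"]) (use finJ in auto)
  hence finV: "finite Vals" unfolding Vals_def by (rule finite_imageI)
  define m where "m = Min (insert 1 Vals)"
  have m0: "m > 0" unfolding m_def
  proof (subst Min_gr_iff)
    show "finite (insert 1 Vals)" using finV by simp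
    show "\<forall>x\<in>insert 1 Vals. 0 < x" by (auto simp: Vals_def)
  qed simp
  have am: "\<forall>S\<subseteq>J. (\<Sum>k\<in>S. a k) \<noteq> 0 \<longrightarrow> m \<le> \<bar>\<Sum>k\<in>S. a k\<bar>"
  proof (intro allI impI)
    fix S assume "S \<subseteq> J" "(\<Sum>k\<in>S. a k) \<noteq> 0"
    hence "\<bar>\<Sum>k\<in>S. a k\<bar> \<in> insert 1 Vals" unfolding Vals_def by blast
    thus "m \<le> \<bar>\<Sum>k\<in>S. a k\<bar>" unfolding m_def using finV by (intro Min_le) simp_all
  qed
  define w where "w = comb z J a P"
  have wF: "w \<in> Free z" using finJ by (simp add: w_def comb_Free)
  have wphi: "w \<phi> = \<nu> \<phi> + t * \<mu> \<phi>" for \<phi>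
  proof -
    have "w \<phi> = (\<Sum>k\<in>J. \<beta> k * delta z (P k) \<phi>) + t * (\<Sum>k\<in>J. \<gamma> k * delta z (P k) \<phi>)"
      by (simp add: w_def comb_def a_def distrib_right sum.distrib sum_distrib_left mult.assoc)
    thus ?thesis by (simp add: \<mu>c \<nu>c comb_def)
  qed
  have \<nu>\<nu>0b: "dbounded z (fdiff \<nu> \<nu>0)"
    by (rule dbounded_fdiff[OF Free_dbounded[OF \<nu>F] Free_dbounded[OF \<nu>0(1)]])
  have "dnorm z (fdiff w \<nu>0) \<le> t * dnorm z \<mu> + dnorm z (fdiff \<nu> \<nu>0)"
  proof (rule dnorm_le)
    fix \<phi> assume u: "\<phi> \<in> Lip0 z" "lipconst \<phi> \<le> 1"
    have "\<bar>fdiff w \<nu>0 \<phi>\<bar> = \<bar>t * \<mu> \<phi> + fdiff \<nu> \<nu>0 \<phi>\<bar>" by (simp add: fdiff_def wphi)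
    also have "\<dots> \<le> t * \<bar>\<mu> \<phi>\<bar> + \<bar>fdiff \<nu> \<nu>0 \<phi>\<bar>" using t(1) by (simp add: abs_mult abs_triangle_ineq[THEN order_trans])
    also have "\<dots> \<le> t * dnorm z \<mu> + dnorm z (fdiff \<nu> \<nu>0)"
      using dnorm_ge[OF \<mu>b u] dnorm_ge[OF \<nu>\<nu>0b u] t(1) by (simp add: add_mono mult_left_mono)
    finally show "\<bar>fdiff w \<nu>0 \<phi>\<bar> \<le> t * dnorm z \<mu> + dnorm z (fdiff \<nu> \<nu>0)" .
  qed
  moreover have "t * dnorm z \<mu> < \<epsilon> / 2"
  proof -
    have "t * dnorm z \<mu> \<le> t * (dnorm z \<mu> + 1)" using t(1) by simp
    also have "\<dots> < t0 * (dnorm z \<mu> + 1)" using t(1) dn\<mu> by (simp add: mult_strict_right_mono)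
    also have "\<dots> = \<epsilon> / 2" using dn\<mu> by (simp add: t0_def field_simps)
    finally show ?thesis .
  qed
  moreover have "dnorm z (fdiff \<nu> \<nu>0) < \<epsilon> / 2" using \<nu>(2) by (simp add: dnorm_fdiff_sym)
  ultimately have "dnorm z (fdiff w \<nu>0) < \<epsilon>" by linarith
  hence wR: "w \<in> Rset z T" using \<nu>0(3) wF by blast
  hence freq: "\<exists>\<^sub>F n in sequentially. dnorm z (fdiff w ((T ^^ n) w)) < 1"
    unfolding Rset_def by (intro freq_small) simp
  have wb: "dbounded z w" using wF by (rule Free_dbounded)
  define Bw where "Bw = dnorm z w + 1"
  define K0 where "K0 = (real (card J ^ 2) + 1) * (Bw / m + 1) * (\<Sum>k\<in>J. \<bar>\<gamma> k\<bar>)"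
  have "filterlim (\<lambda>n. dnorm z ((T ^^ n) \<mu>)) at_top sequentially" using \<mu>A by (simp add: Aset_def)
  hence ev: "\<forall>\<^sub>F n in sequentially. K0 + 1 \<le> dnorm z ((T ^^ n) \<mu>)"
    by (simp add: filterlim_at_top)
  obtain n where n: "dnorm z (fdiff w ((T ^^ n) w)) < 1" "K0 + 1 \<le> dnorm z ((T ^^ n) \<mu>)"
    using frequently_eventually_frequently[OF freq ev] by (auto dest: frequently_ex)
  define P' where "P' = (f ^^ n) \<circ> P"
  have Tw: "(T ^^ n) w = comb z J a P'" unfolding w_def P'_def by (rule T_pow_comb[OF bl hT finJ])
  have T\<mu>: "(T ^^ n) \<mu> = comb z J \<gamma> P'" unfolding \<mu>c P'_def by (rule T_pow_comb[OF bl hT finJ])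
  have fdb: "dbounded z (fdiff w ((T ^^ n) w))"
    by (rule dbounded_fdiff[OF wb]) (simp add: Tw Free_dbounded comb_Free finJ)
  have Bnd: "\<bar>\<Sum>k\<in>J. a k * \<phi> (P' k)\<bar> \<le> Bw" if u: "\<phi> \<in> Lip0 z" "lipconst \<phi> \<le> 1" for \<phi>
  proof -
    have "(\<Sum>k\<in>J. a k * \<phi> (P' k)) = w \<phi> - fdiff w ((T ^^ n) w) \<phi>"
      by (simp add: fdiff_def Tw comb_unit[OF u(1)])
    hence "\<bar>\<Sum>k\<in>J. a k * \<phi> (P' k)\<bar> \<le> \<bar>w \<phi>\<bar> + \<bar>fdiff w ((T ^^ n) w) \<phi>\<bar>" by linarith
    also have "\<dots> \<le> dnorm z w + dnorm z (fdiff w ((T ^^ n) w))"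
      by (rule add_mono[OF dnorm_ge[OF wb u] dnorm_ge[OF fdb u]])
    finally show ?thesis using n(1) by (simp add: Bw_def)
  qed
  have "dnorm z ((T ^^ n) \<mu>) \<le> K0"
  proof (rule dnorm_le)
    fix \<phi> assume u: "\<phi> \<in> Lip0 z" "lipconst \<phi> \<le> 1"
    have "\<bar>\<Sum>k\<in>J. \<gamma> k * \<phi> (P' k)\<bar> \<le> K0"
      unfolding K0_def by (rule key[OF finJ m0 am ag Bnd u]) 
    thus "\<bar>(T ^^ n) \<mu> \<phi>\<bar> \<le> K0" by (simp add: T\<mu> comb_unit[OF u(1)])
  qed
  thus False using n(2) by simp
qed


end
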